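(* Assume the standing hypotheses (H). Let $t$ be an integer with $t\ge k_3/3$. Let $A$ be a part of $G$ with $|A|=4$, let $\{u,v\}\subseteq A$ be a good pair for $A$, and let $\{y,z\}=A\setminus\{u,v\}$. Then \[\bigl|(L(u)\cap L(v))\cup L(y)\cup L(z)\bigr|\ \ge\ n-t-k_4 .\]
   Context: A list assignment $L$ assigns to each vertex $v$ a set $L(v)$ of colors; an $L$-coloring is a proper coloring $f$ with $f(v)\in L(v)$ for all $v$; $\mathrm{ch}$ denotes choice number and $\chi$ chromatic number. A part of a complete multipartite graph is one of its maximal stable sets. Standing hypotheses (H): $k\ge1$ and $n\ge 2k+2$ are integers; $G$ is a complete $k$-partite graph (exactly $k$ nonempty parts) on $n$ vertices; $L$ is a list assignment for $G$ with $|L(v)|\ge\lceil (n+k-1)/3\rceil$ for every vertex $v$; $G$ has no $L$-coloring; $\left|\bigcup_{v\in V(G)}L(v)\right|\le n-1$; and every graph $H$ with fewer than $n$ vertices satisfies $\mathrm{ch}(H)\le\max\{\chi(H),\lceil(|V(H)|+\chi(H)-1)/3\rceil\}$. For $i\in\{1,2,3,4\}$, $k_i$ denotes the number of parts of $G$ of size $i$. For a part $A$ with $|A|\ge3$, a pair $\{u,v\}\subseteq A$ of distinct vertices is a good pair for $A$ if either $|A|=3$ and $|L(u)\cap L(v)|\ge\frac{k_1+k_4+1}{3}$, or $|A|=4$ and $|L(u)\cap L(v)|\ge|L(w)\cap L(z)|$ where $\{w,z\}=A\setminus\{u,v\}$. *)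

theory Defs
  imports Complex_Main
begin

definition simple_graph :: "'a set \<Rightarrow> ('a \<Rightarrow> 'a \<Rightarrow> bool) \<Rightarrow> bool" where
  "simple_graph V E \<longleftrightarrow> finite V \<and> (\<forall>u\<in>V. \<forall>v\<in>V. E u v \<longrightarrow> E v u) \<and> (\<forall>v\<in>V. \<not> E v v)"

definition proper_coloring :: "'a set \<Rightarrow> ('a \<Rightarrow> 'a \<Rightarrow> bool) \<Rightarrow> ('a \<Rightarrow> 'c) \<Rightarrow> bool" where
  "proper_coloring V E f \<longleftrightarrow> (\<forall>u\<in>V. \<forall>v\<in>V. E u v \<longrightarrow> f u \<noteq> f v)"

definition L_coloring :: "'a set \<Rightarrow> ('a \<Rightarrow> 'a \<Rightarrow> bool) \<Rightarrow> ('a \<Rightarrow> 'c set) \<Rightarrow> ('a \<Rightarrow> 'c) \<Rightarrow> bool" where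
  "L_coloring V E L f \<longleftrightarrow> proper_coloring V E f \<and> (\<forall>v\<in>V. f v \<in> L v)"

definition chromatic_number :: "'a set \<Rightarrow> ('a \<Rightarrow> 'a \<Rightarrow> bool) \<Rightarrow> nat" where
  "chromatic_number V E = (LEAST m. \<exists>f :: 'a \<Rightarrow> nat. proper_coloring V E f \<and> (\<forall>v\<in>V. f v < m))"

definition choice_number :: "'a set \<Rightarrow> ('a \<Rightarrow> 'a \<Rightarrow> bool) \<Rightarrow> nat" where
  "choice_number V E = (LEAST m. \<forall>L :: 'a \<Rightarrow> nat set.
      (\<forall>v\<in>V. finite (L v) \<and> card (L v) \<ge> m) \<longrightarrow> (\<exists>f. L_coloring V E L f))"

definition is_partition :: "'a set \<Rightarrow> 'a set set \<Rightarrow> bool" where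
  "is_partition V P \<longleftrightarrow> \<Union>P = V \<and> {} \<notin> P \<and>
     (\<forall>A\<in>P. \<forall>B\<in>P. A \<noteq> B \<longrightarrow> A \<inter> B = {})"

definition cmp_adj :: "'a set set \<Rightarrow> 'a \<Rightarrow> 'a \<Rightarrow> bool" where
  "cmp_adj P u v \<longleftrightarrow> u \<in> \<Union>P \<and> v \<in> \<Union>P \<and> \<not> (\<exists>A\<in>P. u \<in> A \<and> v \<in> A)"

definition kpart :: "'a set set \<Rightarrow> nat \<Rightarrow> nat" where
  "kpart P i = card {A\<in>P. card A = i}"

text \<open>The induction hypothesis on graph size: every graph H with fewer than n vertices has
  ch(H) \<le> max(chi(H), ceil((|V(H)|+chi(H)-1)/3)). Graphs are taken on vertex type nat
  (every finite graph is isomorphic to one of these).\<close>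
definition small_graphs_ok :: "nat \<Rightarrow> bool" where
  "small_graphs_ok n \<longleftrightarrow> (\<forall>(V :: nat set) E. simple_graph V E \<and> card V < n \<longrightarrow>
      choice_number V E \<le> max (chromatic_number V E)
         (nat \<lceil>(real (card V) + real (chromatic_number V E) - 1) / 3\<rceil>))"

end

theory Submission
  imports Defs
begin


lemma greedy_inj:
  assumes "finite V"
  shows "(\<forall>v\<in>V. finite (L v) \<and> card (L v) \<ge> card V) \<Longrightarrow> \<exists>f. inj_on f V \<and> (\<forall>v\<in>V. f v \<in> L v)"
  using assms
proof (induction V rule: finite_induct)
  case empty
  then show ?case by auto
next
  case (insert x F)
  then have "\<forall>v\<in>F. finite (L v) \<and> card (L v) \<ge> card F" by auto
  with insert.IH obtain f where f: "inj_on f F" "\<forall>v\<in>F. f v \<in> L v" by blast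
  have "card (f ` F) \<le> card F" by (rule card_image_le) (use insert in auto)
  also have "\<dots> < card (L x)" using insert.prems insert.hyps by auto
  finally have lt: "card (f ` F) < card (L x)" .
  have "\<not> L x \<subseteq> f ` F"
  proof
    assume "L x \<subseteq> f ` F"
    then have "card (L x) \<le> card (f ` F)" by (intro card_mono) (use insert.hyps in auto)
    with lt show False by simp
  qed
  then obtain c where c: "c \<in> L x" "c \<notin> f ` F" by blast
  have "inj_on (f(x := c)) (insert x F)" using f(1) c(2) insert.hyps(2)
    by (auto simp: inj_on_def)
  moreover have "\<forall>v\<in>insert x F. (f(x := c)) v \<in> L v" using f(2) c(1) insert.hyps(2) by auto
  ultimately show ?case by blast
qed

lemma choice_number_prop:
  fixes L :: "'a \<Rightarrow> nat set"
  assumes fin: "finite V" and irr: "\<forall>v\<in>V. \<not> E v v"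
    and lists: "\<forall>v\<in>V. finite (L v) \<and> card (L v) \<ge> choice_number V E"
  shows "\<exists>f. L_coloring V E L f"
proof -
  let ?Q = "\<lambda>m. \<forall>L :: 'a \<Rightarrow> nat set.
      (\<forall>v\<in>V. finite (L v) \<and> card (L v) \<ge> m) \<longrightarrow> (\<exists>f. L_coloring V E L f)"
  have Qc: "?Q (card V)"
  proof (intro allI impI)
    fix L :: "'a \<Rightarrow> nat set"
    assume "\<forall>v\<in>V. finite (L v) \<and> card (L v) \<ge> card V"
    from greedy_inj[OF fin this] obtain f where f: "inj_on f V" "\<forall>v\<in>V. f v \<in> L v" by blast
    have "proper_coloring V E f" unfolding proper_coloring_def
    proof (intro ballI impI)
      fix u v assume u: "u \<in> V" and v: "v \<in> V" and e: "E u v"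
      then have "u \<noteq> v" using irr by blast
      then show "f u \<noteq> f v" using f(1) u v unfolding inj_on_def by blast
    qed
    then show "\<exists>f. L_coloring V E L f" using f(2) unfolding L_coloring_def by blast
  qed
  have eq: "choice_number V E = (LEAST m. ?Q m)" by (simp add: choice_number_def)
  have "?Q (LEAST m. ?Q m)" by (rule LeastI[of ?Q, OF Qc])
  then have "?Q (choice_number V E)" by (simp only: eq)
  then show ?thesis using lists by blast
qed

lemma transfer_color:
  fixes W :: "'a set" and E :: "'a \<Rightarrow> 'a \<Rightarrow> bool" and M :: "'a \<Rightarrow> 'c set"
    and g :: "'a \<Rightarrow> nat" and K R n :: nat
  assumes minimal: "small_graphs_ok n" and finW: "finite W" and cardW: "card W < n"
    and sym: "\<forall>u\<in>W. \<forall>v\<in>W. E u v \<longrightarrow> E v u" and irr: "\<forall>v\<in>W. \<not> E v v"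
    and g: "\<forall>u\<in>W. \<forall>v\<in>W. E u v \<longrightarrow> g u \<noteq> g v" and gK: "\<forall>v\<in>W. g v < K"
    and RK: "K \<le> R" and Rb: "nat \<lceil>(real (card W) + real K - 1) / 3\<rceil> \<le> R"
    and lists: "\<forall>w\<in>W. finite (M w) \<and> card (M w) \<ge> R"
  shows "\<exists>f. (\<forall>w\<in>W. f w \<in> M w) \<and> (\<forall>u\<in>W. \<forall>v\<in>W. E u v \<longrightarrow> f u \<noteq> f v)"
proof -
  obtain h :: "'a \<Rightarrow> nat" where h: "inj_on h W"
    using finite_imp_inj_to_nat_seg[OF finW] by blast
  define V' where "V' = h ` W"
  define h' where "h' = inv_into W h"
  have hh: "\<And>w. w \<in> W \<Longrightarrow> h' (h w) = w" unfolding h'_def using h by simp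
  have h'W: "\<And>i. i \<in> V' \<Longrightarrow> h' i \<in> W" unfolding V'_def h'_def by (auto simp: hh[unfolded h'_def])
  define E' where "E' = (\<lambda>i j. E (h' i) (h' j))"
  define U where "U = \<Union>(M ` W)"
  have finU: "finite U" unfolding U_def using finW lists by auto
  obtain c2n :: "'c \<Rightarrow> nat" where c2n: "inj_on c2n U"
    using finite_imp_inj_to_nat_seg[OF finU] by blast
  define n2c where "n2c = inv_into U c2n"
  define L' where "L' = (\<lambda>i. c2n ` M (h' i))"
  have finV': "finite V'" unfolding V'_def using finW by simp
  have cardV': "card V' = card W" unfolding V'_def using h by (simp add: card_image)
  have sg: "simple_graph V' E'" unfolding simple_graph_def E'_def
    using finV' sym irr h'W by blast
  have pc: "proper_coloring V' E' (g \<circ> h')" unfolding proper_coloring_def E'_def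
    using g h'W by auto
  have chi: "chromatic_number V' E' \<le> K" unfolding chromatic_number_def
    by (rule Least_le) (use pc gK h'W in auto)
  have "choice_number V' E' \<le> max (chromatic_number V' E')
         (nat \<lceil>(real (card V') + real (chromatic_number V' E') - 1) / 3\<rceil>)"
  proof -
    have "simple_graph V' E' \<and> card V' < n" using sg cardV' cardW by simp
    then show ?thesis using minimal unfolding small_graphs_ok_def by blast
  qed
  also have "\<dots> \<le> R"
  proof -
    have "\<lceil>(real (card V') + real (chromatic_number V' E') - 1) / 3\<rceil>
        \<le> \<lceil>(real (card W) + real K - 1) / 3\<rceil>"
      using chi cardV' by (intro ceiling_mono) (simp add: divide_right_mono)
    then show ?thesis using Rb RK chi by linarith
  qed
  finally have chR: "choice_number V' E' \<le> R" .
  have Lw: "\<And>w. w \<in> W \<Longrightarrow> M w \<subseteq> U" unfolding U_def by auto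
  have lists': "\<forall>i\<in>V'. finite (L' i) \<and> card (L' i) \<ge> choice_number V' E'"
  proof
    fix i assume i: "i \<in> V'"
    then have w: "h' i \<in> W" by (rule h'W)
    have "card (L' i) = card (M (h' i))" unfolding L'_def
      by (rule card_image, rule inj_on_subset[OF c2n Lw[OF w]])
    then show "finite (L' i) \<and> card (L' i) \<ge> choice_number V' E'"
      using lists w chR unfolding L'_def by auto
  qed
  have irr': "\<forall>v\<in>V'. \<not> E' v v" using sg unfolding simple_graph_def by blast
  obtain f' where f': "L_coloring V' E' L' f'"
    using choice_number_prop[OF finV' irr' lists'] by blast
  define f where "f = (\<lambda>w. n2c (f' (h w)))"
  have "\<forall>w\<in>W. f w \<in> M w"
  proof
    fix w assume w: "w \<in> W"
    then have "h w \<in> V'" unfolding V'_def by simp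
    then have "f' (h w) \<in> c2n ` M w" using f' hh[OF w] unfolding L_coloring_def L'_def by auto
    then obtain c where "c \<in> M w" "f' (h w) = c2n c" by blast
    then show "f w \<in> M w" unfolding f_def n2c_def using c2n Lw[OF w] by auto
  qed
  moreover have "\<forall>u\<in>W. \<forall>v\<in>W. E u v \<longrightarrow> f u \<noteq> f v"
  proof (intro ballI impI)
    fix u v assume u: "u \<in> W" and v: "v \<in> W" and e: "E u v"
    have hu: "h u \<in> V'" "h v \<in> V'" unfolding V'_def using u v by auto
    have "E' (h u) (h v)" unfolding E'_def using hh u v e by simp
    then have ne: "f' (h u) \<noteq> f' (h v)" using f' hu unfolding L_coloring_def proper_coloring_def by blast
    have "f' (h u) \<in> c2n ` M u" "f' (h v) \<in> c2n ` M v"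
      using f' hu hh[OF u] hh[OF v] unfolding L_coloring_def L'_def by auto
    then have "f' (h u) \<in> c2n ` U" "f' (h v) \<in> c2n ` U" using Lw[OF u] Lw[OF v] by auto
    then show "f u \<noteq> f v" unfolding f_def n2c_def using ne c2n
      by (metis f_inv_into_f)
  qed
  ultimately show ?thesis by blast
qed


lemma cmp_adj_sym: "cmp_adj P u v \<Longrightarrow> cmp_adj P v u"
  unfolding cmp_adj_def by blast

lemma cmp_adj_same: "B \<in> P \<Longrightarrow> u \<in> B \<Longrightarrow> v \<in> B \<Longrightarrow> \<not> cmp_adj P u v"
  unfolding cmp_adj_def by blast

lemma part_index:
  assumes finP: "finite P" and kP: "card P = k"
  shows "\<exists>g :: 'a \<Rightarrow> nat. (\<forall>w\<in>\<Union>P. g w < k) \<and>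
      (\<forall>u\<in>\<Union>P. \<forall>v\<in>\<Union>P. cmp_adj P u v \<longrightarrow> g u \<noteq> g v)"
proof -
  obtain idx where idx: "bij_betw idx P {0..<card P}" using ex_bij_betw_finite_nat[OF finP] by blast
  define pt where "pt = (\<lambda>w. SOME B. B \<in> P \<and> w \<in> B)"
  have pt: "\<And>w. w \<in> \<Union>P \<Longrightarrow> pt w \<in> P \<and> w \<in> pt w"
    unfolding pt_def by (rule someI_ex) blast
  define g where "g = (\<lambda>w. idx (pt w))"
  have "\<forall>w\<in>\<Union>P. g w < k"
  proof
    fix w assume "w \<in> \<Union>P"
    then have "pt w \<in> P" using pt by blast
    then have "idx (pt w) \<in> {0..<card P}" using idx unfolding bij_betw_def by blast
    then show "g w < k" unfolding g_def using kP by simp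
  qed
  moreover have "\<forall>u\<in>\<Union>P. \<forall>v\<in>\<Union>P. cmp_adj P u v \<longrightarrow> g u \<noteq> g v"
  proof (intro ballI impI notI)
    fix u v assume u: "u \<in> \<Union>P" and v: "v \<in> \<Union>P" and e: "cmp_adj P u v" and eq: "g u = g v"
    have "pt u = pt v" using eq pt[OF u] pt[OF v] idx unfolding g_def bij_betw_def inj_on_def by blast
    then show False using cmp_adj_same[of "pt u" P u v] pt[OF u] pt[OF v] e by simp
  qed
  ultimately show ?thesis by blast
qed

lemma no_triple:
  fixes P :: "'a set set" and L :: "'a \<Rightarrow> 'c set" and k n :: nat and S :: int
  assumes part: "is_partition (\<Union>P) P"
    and finV: "finite (\<Union>P)"
    and nV: "card (\<Union>P) = n"
    and kP: "card P = k"
    and fin_lists: "\<forall>w\<in>\<Union>P. finite (L w)"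
    and S: "S = \<lceil>(real n + real k - 1) / 3\<rceil>"
    and listS: "\<forall>w\<in>\<Union>P. int (card (L w)) \<ge> S"
    and Sk: "S \<ge> int k + 1"
    and no_col: "\<not> (\<exists>f. L_coloring (\<Union>P) (cmp_adj P) L f)"
    and minimal: "small_graphs_ok n"
    and B: "B \<in> P" and x: "x1 \<in> B" "x2 \<in> B" "x3 \<in> B" "x1 \<noteq> x2" "x1 \<noteq> x3" "x2 \<noteq> x3"
  shows "L x1 \<inter> L x2 \<inter> L x3 = {}"
proof (rule ccontr)
  assume "L x1 \<inter> L x2 \<inter> L x3 \<noteq> {}"
  then obtain c where c: "c \<in> L x1" "c \<in> L x2" "c \<in> L x3" by blast
  define X where "X = {x1, x2, x3}"
  define W where "W = \<Union>P - X"
  have XV: "X \<subseteq> \<Union>P" unfolding X_def using B x by blast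
  have cX: "card X = 3" unfolding X_def using x by simp
  have finP: "finite P" using finV by (rule finite_UnionD)
  obtain g :: "'a \<Rightarrow> nat" where g: "\<forall>w\<in>\<Union>P. g w < k"
      "\<forall>u\<in>\<Union>P. \<forall>v\<in>\<Union>P. cmp_adj P u v \<longrightarrow> g u \<noteq> g v"
    using part_index[OF finP kP] by blast
  have finW: "finite W" unfolding W_def using finV by simp
  have finX: "finite X" unfolding X_def by simp
  have cW: "card W = n - 3" unfolding W_def using card_Diff_subset[OF finX XV] cX nV by simp
  have n3: "n \<ge> 3" using card_mono[OF finV XV] cX nV by simp
  have WV: "W \<subseteq> \<Union>P" unfolding W_def by blast
  define R where "R = nat (S - 1)"
  have "\<exists>f. (\<forall>w\<in>W. f w \<in> L w - {c}) \<and> (\<forall>u\<in>W. \<forall>v\<in>W. cmp_adj P u v \<longrightarrow> f u \<noteq> f v)"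
  proof (rule transfer_color[where g = g and K = k and R = R and n = n])
    show "small_graphs_ok n" by (rule minimal)
    show "finite W" by (rule finW)
    show "card W < n" using cW n3 by simp
    show "\<forall>u\<in>W. \<forall>v\<in>W. cmp_adj P u v \<longrightarrow> cmp_adj P v u" unfolding cmp_adj_def by blast
    show "\<forall>v\<in>W. \<not> cmp_adj P v v" unfolding cmp_adj_def W_def by blast
    show "\<forall>u\<in>W. \<forall>v\<in>W. cmp_adj P u v \<longrightarrow> g u \<noteq> g v" using g(2) WV by blast
    show "\<forall>v\<in>W. g v < k" using g(1) WV by blast
    show "k \<le> R" unfolding R_def using Sk by simp
    have "(real (card W) + real k - 1) / 3 = (real n + real k - 1) / 3 - 1"
      using cW n3 by (simp add: of_nat_diff field_simps)
    then have "\<lceil>(real (card W) + real k - 1) / 3\<rceil> = \<lceil>(real n + real k - 1) / 3 - 1\<rceil>"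
      by (rule arg_cong)
    also have "\<dots> = S - 1" unfolding S by (rule ceiling_diff_one)
    finally have "\<lceil>(real (card W) + real k - 1) / 3\<rceil> = S - 1" .
    then show "nat \<lceil>(real (card W) + real k - 1) / 3\<rceil> \<le> R" unfolding R_def by simp
    show "\<forall>w\<in>W. finite (L w - {c}) \<and> R \<le> card (L w - {c})"
    proof
      fix w assume w: "w \<in> W"
      then have fw: "finite (L w)" and sw: "int (card (L w)) \<ge> S" using fin_lists listS WV by auto
      have "card (L w - {c}) \<ge> card (L w) - 1" by (simp add: card_Diff_singleton_if)
      then show "finite (L w - {c}) \<and> R \<le> card (L w - {c})" using fw sw unfolding R_def by auto
    qed
  qed
  then obtain f where f: "\<forall>w\<in>W. f w \<in> L w - {c}" "\<forall>u\<in>W. \<forall>v\<in>W. cmp_adj P u v \<longrightarrow> f u \<noteq> f v"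
    by blast
  define F where "F = (\<lambda>w. if w \<in> X then c else f w)"
  have "L_coloring (\<Union>P) (cmp_adj P) L F"
    unfolding L_coloring_def proper_coloring_def
  proof (intro conjI ballI impI)
    fix w assume "w \<in> \<Union>P"
    then show "F w \<in> L w" unfolding F_def using f(1) c unfolding W_def X_def by auto
  next
    fix u v assume u: "u \<in> \<Union>P" and v: "v \<in> \<Union>P" and e: "cmp_adj P u v"
    show "F u \<noteq> F v"
    proof (cases "u \<in> X")
      case True
      show ?thesis
      proof (cases "v \<in> X")
        case True
        then show ?thesis using \<open>u \<in> X\<close> cmp_adj_same[OF B, of u v] e x unfolding X_def by auto
      next
        case False
        then have "v \<in> W" unfolding W_def using v by blast
        then show ?thesis using f(1) False \<open>u \<in> X\<close> unfolding F_def by auto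
      qed
    next
      case False
      then have uW: "u \<in> W" unfolding W_def using u by blast
      show ?thesis
      proof (cases "v \<in> X")
        case True
        then show ?thesis using f(1) False uW unfolding F_def by auto
      next
        case False
        then have "v \<in> W" unfolding W_def using v by blast
        then show ?thesis using f(2) uW e \<open>u \<notin> X\<close> False unfolding F_def by auto
      qed
    qed
  qed
  with no_col show False by blast
qed


lemma double_count:
  fixes B :: "'a set" and L :: "'a \<Rightarrow> 'c set" and U :: "'c set"
  assumes finB: "finite B" and finU: "finite U" and sub: "\<forall>w\<in>B. L w \<subseteq> U"
    and nt: "\<forall>x1\<in>B. \<forall>x2\<in>B. \<forall>x3\<in>B. x1 \<noteq> x2 \<and> x1 \<noteq> x3 \<and> x2 \<noteq> x3 \<longrightarrow> L x1 \<inter> L x2 \<inter> L x3 = {}"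
  shows "(\<Sum>w\<in>B. card (L w)) \<le> 2 * card U"
proof -
  have "(\<Sum>w\<in>B. card (L w)) = (\<Sum>w\<in>B. \<Sum>c\<in>U. (of_bool (c \<in> L w) :: nat))"
  proof (rule sum.cong)
    fix w assume w: "w \<in> B"
    have "(\<Sum>c\<in>U. (of_bool (c \<in> L w) :: nat)) = card (U \<inter> {c. c \<in> L w})"
      using finU by simp
    also have "U \<inter> {c. c \<in> L w} = L w" using sub w by blast
    finally show "card (L w) = (\<Sum>c\<in>U. (of_bool (c \<in> L w) :: nat))" by simp
  qed simp
  also have "\<dots> = (\<Sum>c\<in>U. \<Sum>w\<in>B. (of_bool (c \<in> L w) :: nat))" by (rule sum.swap)
  also have "\<dots> \<le> (\<Sum>c\<in>U. 2)"
  proof (rule sum_mono)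
    fix c assume c: "c \<in> U"
    have "(\<Sum>w\<in>B. (of_bool (c \<in> L w) :: nat)) = card (B \<inter> {w. c \<in> L w})"
      using finB by simp
    also have "B \<inter> {w. c \<in> L w} = {w\<in>B. c \<in> L w}" by blast
    finally have eq: "(\<Sum>w\<in>B. (of_bool (c \<in> L w) :: nat)) = card {w\<in>B. c \<in> L w}" .
    have "card {w\<in>B. c \<in> L w} \<le> 2"
    proof (rule ccontr)
      assume "\<not> card {w\<in>B. c \<in> L w} \<le> 2"
      then have "3 \<le> card {w\<in>B. c \<in> L w}" by simp
      then obtain T where T: "T \<subseteq> {w\<in>B. c \<in> L w}" "card T = 3"
        by (meson obtain_subset_with_card_n)
      then obtain a b d where abd: "T = {a, b, d}" "a \<noteq> b" "b \<noteq> d" "a \<noteq> d"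
        unfolding card_3_iff by blast
      have "a \<in> B" "b \<in> B" "d \<in> B" "c \<in> L a" "c \<in> L b" "c \<in> L d" using T(1) abd(1) by auto
      then show False using nt abd(2-4) by blast
    qed
    then show "(\<Sum>w\<in>B. (of_bool (c \<in> L w) :: nat)) \<le> 2" using eq by simp
  qed
  also have "\<dots> = 2 * card U" by simp
  finally show ?thesis .
qed


theorem lemma24:
  fixes P :: "'a set set" and L :: "'a \<Rightarrow> 'c set" and k n :: nat and t :: int
    and A :: "'a set" and u v y z :: 'a
  assumes k1: "k \<ge> 1"
    and n_ge: "n \<ge> 2 * k + 2"
    and part: "is_partition (\<Union>P) P"
    and finV: "finite (\<Union>P)"
    and nV: "card (\<Union>P) = n"
    and kP: "card P = k"
    and fin_lists: "\<forall>w\<in>\<Union>P. finite (L w)"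
    and list_size: "\<forall>w\<in>\<Union>P. real (card (L w)) \<ge> \<lceil>(real n + real k - 1) / 3\<rceil>"
    and no_col: "\<not> (\<exists>f. L_coloring (\<Union>P) (cmp_adj P) L f)"
    and few_colors: "card (\<Union>w\<in>\<Union>P. L w) \<le> n - 1"
    and minimal: "small_graphs_ok n"
    and t_ge: "real_of_int t \<ge> real (kpart P 3) / 3"
    and AP: "A \<in> P" and A4: "card A = 4"
    and uv: "u \<in> A" "v \<in> A" "u \<noteq> v"
    and good: "card (L u \<inter> L v) \<ge> card (L y \<inter> L z)"
    and yz: "{y, z} = A - {u, v}"
  shows "int (card ((L u \<inter> L v) \<union> L y \<union> L z)) \<ge> int n - t - int (kpart P 4)"
proof -
  define V where "V = \<Union>P"
  have finP: "finite P" using finV by (rule finite_UnionD)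
  define S where "S = \<lceil>(real n + real k - 1) / 3\<rceil>"
  have listS: "\<forall>w\<in>\<Union>P. int (card (L w)) \<ge> S"
  proof
    fix w assume w: "w \<in> \<Union>P"
    have "real_of_int S \<le> real (card (L w))" using list_size w unfolding S_def by blast
    then have "real_of_int S \<le> real_of_int (int (card (L w)))" by simp
    then show "int (card (L w)) \<ge> S" by (simp only: of_int_le_iff)
  qed
  have "(real n + real k - 1) / 3 \<le> real_of_int S" unfolding S_def by (rule le_of_int_ceiling)
  then have "real_of_int (int n + int k - 1) \<le> real_of_int (3 * S)" by simp
  then have S3: "int n + int k - 1 \<le> 3 * S" by (simp only: of_int_le_iff)
  have Sk: "S \<ge> int k + 1" using S3 n_ge by presburger
  define s0 where "s0 = nat S"
  have S0: "S = int s0" unfolding s0_def using Sk by simp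
  have ls0: "\<forall>w\<in>\<Union>P. card (L w) \<ge> s0" using listS S0 by auto
  have s03: "n + k \<le> 3 * s0 + 1" using S3 S0 by linarith
  have s0k: "s0 \<ge> k + 1" using Sk S0 by linarith
  have nt: "\<And>B x1 x2 x3. B \<in> P \<Longrightarrow> x1 \<in> B \<Longrightarrow> x2 \<in> B \<Longrightarrow> x3 \<in> B \<Longrightarrow> x1 \<noteq> x2 \<Longrightarrow>
      x1 \<noteq> x3 \<Longrightarrow> x2 \<noteq> x3 \<Longrightarrow> L x1 \<inter> L x2 \<inter> L x3 = {}"
    by (rule no_triple[OF part finV nV kP fin_lists S_def listS Sk no_col minimal])
  define U where "U = (\<Union>w\<in>\<Union>P. L w)"
  have finU: "finite U" unfolding U_def using finV fin_lists by (intro finite_UN_I) blast+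
  have cU: "card U \<le> n - 1" using few_colors unfolding U_def .
  have partB: "\<And>B. B \<in> P \<Longrightarrow> (\<Sum>w\<in>B. card (L w)) \<le> 2 * card U"
  proof -
    fix B assume B: "B \<in> P"
    have finB: "finite B" using B finV by (meson Union_upper finite_subset)
    show "(\<Sum>w\<in>B. card (L w)) \<le> 2 * card U"
    proof (rule double_count[OF finB finU])
      show "\<forall>w\<in>B. L w \<subseteq> U" unfolding U_def using B by blast
      show "\<forall>x1\<in>B. \<forall>x2\<in>B. \<forall>x3\<in>B. x1 \<noteq> x2 \<and> x1 \<noteq> x3 \<and> x2 \<noteq> x3 \<longrightarrow> L x1 \<inter> L x2 \<inter> L x3 = {}"
        using nt[OF B] by blast
    qed
  qed
  have disj: "\<forall>A\<in>P. \<forall>B\<in>P. A \<noteq> B \<longrightarrow> A \<inter> B = {}" and ne: "{} \<notin> P"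
    using part unfolding is_partition_def by auto
  have finparts: "\<forall>B\<in>P. finite B" using finV by (meson Union_upper finite_subset)
  have sumV: "(\<Sum>w\<in>\<Union>P. card (L w)) = (\<Sum>B\<in>P. \<Sum>w\<in>B. card (L w))"
    using sum.Union_disjoint[OF finparts disj] by simp
  have glob: "n * s0 \<le> k * (2 * (n - 1))"
  proof -
    have "n * s0 = (\<Sum>w\<in>\<Union>P. s0)" using nV by simp
    also have "\<dots> \<le> (\<Sum>w\<in>\<Union>P. card (L w))" by (rule sum_mono) (use ls0 in blast)
    also have "\<dots> = (\<Sum>B\<in>P. \<Sum>w\<in>B. card (L w))" by (rule sumV)
    also have "\<dots> \<le> (\<Sum>B\<in>P. 2 * card U)" by (rule sum_mono) (rule partB)
    also have "\<dots> = k * (2 * card U)" using kP by simp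
    also have "\<dots> \<le> k * (2 * (n - 1))" using cU by simp
    finally show ?thesis .
  qed
  have le4: "\<And>B. B \<in> P \<Longrightarrow> card B \<le> 4"
  proof (rule ccontr)
    fix B assume B: "B \<in> P" and "\<not> card B \<le> 4"
    then have b5: "card B \<ge> 5" by simp
    have "card B * s0 = (\<Sum>w\<in>B. s0)" by simp
    also have "\<dots> \<le> (\<Sum>w\<in>B. card (L w))" by (rule sum_mono) (use ls0 B in blast)
    also have "\<dots> \<le> 2 * card U" by (rule partB[OF B])
    also have "\<dots> \<le> 2 * (n - 1)" using cU by simp
    finally have bs: "card B * s0 \<le> 2 * (n - 1)" .
    have "5 * s0 \<le> card B * s0" using b5 by simp
    with bs have "5 * s0 \<le> 2 * (n - 1)" by linarith
    with s03 k1 n_ge have n5: "n \<ge> 5 * k + 1" by linarith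
    then have "3 * s0 \<ge> 6 * k" using s03 by linarith
    then have "n * (3 * s0) \<ge> n * (6 * k)" by (rule mult_le_mono2)
    moreover have "n * (6 * k) = 3 * (k * (2 * n))" by simp
    moreover have "n * (3 * s0) \<le> 3 * (k * (2 * (n - 1)))" using glob by linarith
    moreover have "k * (2 * (n - 1)) < k * (2 * n)" using k1 n5 by simp
    ultimately show False by linarith
  qed
  have ge1: "\<And>B. B \<in> P \<Longrightarrow> card B \<ge> 1"
  proof -
    fix B assume B: "B \<in> P"
    then have "B \<noteq> {}" using ne by blast
    then show "card B \<ge> 1" using finparts B by (simp add: Suc_le_eq card_gt_0_iff)
  qed
  have nsum: "n = (\<Sum>B\<in>P. card B)"
  proof -
    have "card (\<Union>P) = sum card P"
      by (rule card_Union_disjoint) (use disj finparts in \<open>auto simp: pairwise_def disjnt_def\<close>)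
    then show ?thesis using nV by simp
  qed
  have k3eq: "kpart P 3 = (\<Sum>B\<in>P. (of_bool (card B = 3) :: nat))"
    unfolding kpart_def using finP by (simp add: Collect_conj_eq Int_commute)
  have k4eq: "kpart P 4 = (\<Sum>B\<in>P. (of_bool (card B = 4) :: nat))"
    unfolding kpart_def using finP by (simp add: Collect_conj_eq Int_commute)
  have count: "n \<le> 2 * k + kpart P 3 + 3 * kpart P 4"
  proof -
    have "n \<le> (\<Sum>B\<in>P. 2 + of_bool (card B = 3) + 3 * of_bool (card B = 4))"
      unfolding nsum
    proof (rule sum_mono)
      fix B assume B: "B \<in> P"
      have "card B \<le> 4" "card B \<ge> 1" using le4[OF B] ge1[OF B] by auto
      then show "card B \<le> 2 + of_bool (card B = 3) + 3 * of_bool (card B = 4)"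
        by (cases "card B = 3"; cases "card B = 4"; simp)
    qed
    also have "\<dots> = (\<Sum>B\<in>P. 2) + (\<Sum>B\<in>P. (of_bool (card B = 3) :: nat)) + 3 * (\<Sum>B\<in>P. (of_bool (card B = 4) :: nat))"
      by (simp only: sum.distrib sum_distrib_left)
    also have "\<dots> = 2 * k + kpart P 3 + 3 * kpart P 4"
      unfolding k3eq k4eq using kP by simp
    finally show ?thesis .
  qed
  have cA2: "card (A - {u, v}) = 2"
  proof -
    have "finite A" using finparts AP by blast
    then show ?thesis using A4 uv by (simp add: card_Diff_subset)
  qed
  have "y \<in> A - {u, v}" "z \<in> A - {u, v}" unfolding yz[symmetric] by simp_all
  then have yzA: "y \<in> A" "z \<in> A" "y \<noteq> u" "y \<noteq> v" "z \<noteq> u" "z \<noteq> v" by simp_all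
  have ynz: "y \<noteq> z"
  proof
    assume "y = z"
    then have "A - {u, v} = {y}" using yz by simp
    then show False using cA2 by simp
  qed
  have d1: "(L u \<inter> L v) \<inter> L y = {}"
    by (rule nt[OF AP uv(1) uv(2) yzA(1) uv(3)]) (use yzA in auto)
  have d2: "(L u \<inter> L v) \<inter> L z = {}"
    by (rule nt[OF AP uv(1) uv(2) yzA(2) uv(3)]) (use yzA in auto)
  have inP: "u \<in> \<Union>P" "v \<in> \<Union>P" "y \<in> \<Union>P" "z \<in> \<Union>P"
    using uv(1,2) yzA(1,2) AP by (auto intro: UnionI)
  have fu: "finite (L u)" "finite (L v)" "finite (L y)" "finite (L z)"
    using fin_lists inP by blast+
  have "card ((L u \<inter> L v) \<union> L y \<union> L z) = card (L u \<inter> L v) + card (L y \<union> L z)"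
  proof -
    have eq: "(L u \<inter> L v) \<union> L y \<union> L z = (L u \<inter> L v) \<union> (L y \<union> L z)" by blast
    have dj: "(L u \<inter> L v) \<inter> (L y \<union> L z) = {}" using d1 d2 by blast
    have f1: "finite (L u \<inter> L v)" using fu(1) by simp
    have f2: "finite (L y \<union> L z)" using fu(3,4) by simp
    show ?thesis unfolding eq by (rule card_Un_disjoint[OF f1 f2 dj])
  qed
  moreover have "card (L y \<union> L z) + card (L y \<inter> L z) = card (L y) + card (L z)"
    using card_Un_Int[OF fu(3) fu(4)] by simp
  moreover have "card (L y) \<ge> s0" "card (L z) \<ge> s0" using ls0 inP by blast+
  ultimately have C2: "card ((L u \<inter> L v) \<union> L y \<union> L z) \<ge> 2 * s0" using good by linarith
  have "real_of_int (3 * t) \<ge> real_of_int (int (kpart P 3))" using t_ge by simp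
  then have t3: "3 * t \<ge> int (kpart P 3)" by (simp only: of_int_le_iff)
  have "3 * (int n - t - int (kpart P 4)) \<le> 3 * (2 * int s0) + 2"
  proof -
    have c1: "int n \<le> 2 * int k + int (kpart P 3) + 3 * int (kpart P 4)" using count by linarith
    have c2: "int n + int k \<le> 3 * int s0 + 1" using s03 by linarith
    show ?thesis using t3 c1 c2 by (simp add: algebra_simps)
  qed
  then have "int n - t - int (kpart P 4) \<le> 2 * int s0" by presburger
  then show ?thesis using C2 by linarith
qed

end
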